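(* Let $d\ge0$ and let $L:\mathbb{C}_{2d+2}[z,\overline z]\to\mathbb{C}$ be a real linear functional which is non-negative on all real squares, i.e. $L(|f|^2)\ge0$ for all $f\in\mathbb{C}_{d+1}[z,\overline z]$, and which is strictly positive on hermitian squares of bidegree at most $(d,d)$, i.e. $L(|p(z)|^2)>0$ for every nonzero $p\in\mathbb{C}_d[z]$. Let $M=\pi_dM_z|_{A_d}$ and let $\sigma_M(p,q)=\|p\|_L^2+\|Mq\|_L^2+2\Re\langle Mp,q\rangle_L$ on $A_d\oplus A_d$. The following are equivalent: (a) there exist an integer $N\le d+1$, points $a_1,\dots,a_N\in\mathbb{C}$ and weights $c_1,\dots,c_N>0$ such that $$L\big(p(z)\overline{q(z)}\big)=\sum_{k=1}^N c_k\,p(a_k)\overline{q(a_k)}$$ for all $p,q\in\mathbb{C}_{d+1}[z]$ with $\deg p+\deg q\le 2d+1$; (b) the hermitian form $\sigma_M$ is positive semidefinite on all of $A_d\oplus A_d$ (i.e. $\sigma_M$ has no negative eigenvalue, so its only possible non-positive eigenvalue is $0$).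
   Context: Notation: $\mathbb{C}_n[z]$ denotes complex polynomials in $z$ of degree $\le n$; $\mathbb{C}_n[z,\overline z]$ denotes polynomials in $z,\overline z$ of total degree $\le n$. $L$ real means $L(\overline p)=\overline{L(p)}$. $\langle p,q\rangle_L=L(p\overline q)$ and $\|p\|_L^2=L(|p|^2)$. Under the strict positivity hypothesis, $A_d=\mathbb{C}_d[z]$ is a $(d+1)$-dimensional Hilbert space with inner product $\langle\cdot,\cdot\rangle_L$; $A_{d+1}$ is the Hilbert space obtained from $\mathbb{C}_{d+1}[z]$ with the form $\langle\cdot,\cdot\rangle_L$ after quotienting by null vectors, containing $A_d$; $\pi_d$ is the orthogonal projection of $A_{d+1}$ onto $A_d$; $M_z:A_d\to A_{d+1}$ is induced by $p\mapsto zp$, so $M$ is the compression of multiplication by $z$ to $\mathbb{C}_d[z]$. *)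

theory Defs
  imports Complex_Main "HOL-Computational_Algebra.Polynomial"
begin

text \<open>Polynomials in z and conj z are represented by coefficient arrays:
  f i j is the coefficient of the monomial z^i (conj z)^j.\<close>
type_synonym bpoly = "nat \<Rightarrow> nat \<Rightarrow> complex"

definition in_bdeg :: "nat \<Rightarrow> bpoly \<Rightarrow> bool" where
  "in_bdeg n f \<longleftrightarrow> (\<forall>i j. f i j \<noteq> 0 \<longrightarrow> i + j \<le> n)"

definition badd :: "bpoly \<Rightarrow> bpoly \<Rightarrow> bpoly" where
  "badd f g = (\<lambda>i j. f i j + g i j)"

definition bscale :: "complex \<Rightarrow> bpoly \<Rightarrow> bpoly" where
  "bscale c f = (\<lambda>i j. c * f i j)"

text \<open>complex conjugate of the polynomial: conj(z^i conj z^j) = z^j conj z^i\<close>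
definition bconj :: "bpoly \<Rightarrow> bpoly" where
  "bconj f = (\<lambda>i j. cnj (f j i))"

definition bmult :: "bpoly \<Rightarrow> bpoly \<Rightarrow> bpoly" where
  "bmult f g = (\<lambda>i j. \<Sum>a\<le>i. \<Sum>b\<le>j. f a b * g (i - a) (j - b))"

definition bemb :: "complex poly \<Rightarrow> bpoly" where
  "bemb p = (\<lambda>i j. if j = 0 then coeff p i else 0)"

definition hprod :: "complex poly \<Rightarrow> complex poly \<Rightarrow> bpoly" where
  "hprod p q = bmult (bemb p) (bconj (bemb q))"

definition lin_functional :: "nat \<Rightarrow> (bpoly \<Rightarrow> complex) \<Rightarrow> bool" where
  "lin_functional n L \<longleftrightarrow>
     (\<forall>f g. in_bdeg n f \<longrightarrow> in_bdeg n g \<longrightarrow> L (badd f g) = L f + L g) \<and>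
     (\<forall>c f. in_bdeg n f \<longrightarrow> L (bscale c f) = c * L f)"

definition real_functional :: "nat \<Rightarrow> (bpoly \<Rightarrow> complex) \<Rightarrow> bool" where
  "real_functional n L \<longleftrightarrow> (\<forall>f. in_bdeg n f \<longrightarrow> L (bconj f) = cnj (L f))"

definition ipL :: "(bpoly \<Rightarrow> complex) \<Rightarrow> complex poly \<Rightarrow> complex poly \<Rightarrow> complex" where
  "ipL L p q = L (hprod p q)"

definition projL :: "(bpoly \<Rightarrow> complex) \<Rightarrow> nat \<Rightarrow> complex poly \<Rightarrow> complex poly" where
  "projL L d f = (THE q. degree q \<le> d \<and> (\<forall>r. degree r \<le> d \<longrightarrow> ipL L (f - q) r = 0))"

definition compM :: "(bpoly \<Rightarrow> complex) \<Rightarrow> nat \<Rightarrow> complex poly \<Rightarrow> complex poly" where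
  "compM L d p = projL L d (pCons 0 p)"

definition sigmaM :: "(bpoly \<Rightarrow> complex) \<Rightarrow> nat \<Rightarrow> complex poly \<Rightarrow> complex poly \<Rightarrow> real" where
  "sigmaM L d p q = Re (ipL L p p) + Re (ipL L (compM L d q) (compM L d q))
                    + 2 * Re (ipL L (compM L d p) q)"

end

theory Submission imports Defs "HOL-Computational_Algebra.Fundamental_Theorem_Algebra" begin

lemma hprod_eq: "hprod p q = (\<lambda>i j. coeff p i * cnj (coeff q j))"
proof (intro ext)
  fix i j
  have "hprod p q i j = (\<Sum>a\<le>i. \<Sum>b\<le>j. (if b = 0 then coeff p a else 0) *
          cnj (if i - a = 0 then coeff q (j - b) else 0))"
    by (simp add: hprod_def bmult_def bemb_def bconj_def)
  also have "\<dots> = (\<Sum>a\<le>i. coeff p a * cnj (if i - a = 0 then coeff q j else 0))"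
  proof (intro sum.cong refl)
    fix a
    have "\<And>(X::complex) f. (\<Sum>b\<le>j. (if b = 0 then X else 0) * f b) = X * f 0"
      by (subst sum.remove[of _ 0]) auto
    thus "(\<Sum>b\<le>j. (if b = 0 then coeff p a else 0) * cnj (if i - a = 0 then coeff q (j - b) else 0)) =
      coeff p a * cnj (if i - a = 0 then coeff q j else 0)" by simp
  qed
  also have "\<dots> = (\<Sum>a\<le>i. if a = i then coeff p i * cnj (coeff q j) else 0)"
    by (intro sum.cong refl) auto
  also have "\<dots> = coeff p i * cnj (coeff q j)" by simp
  finally show "hprod p q i j = coeff p i * cnj (coeff q j)" .
qed

lemma in_bdeg_hprod: "degree p + degree q \<le> n \<Longrightarrow> in_bdeg n (hprod p q)"
  unfolding in_bdeg_def hprod_eq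
  by (metis add_le_mono le_degree le_trans mult_eq_0_iff complex_cnj_zero_iff)

lemma hprod_add1: "hprod (p1 + p2) q = badd (hprod p1 q) (hprod p2 q)"
  by (simp add: hprod_eq badd_def algebra_simps)
lemma hprod_add2: "hprod p (q1 + q2) = badd (hprod p q1) (hprod p q2)"
  by (simp add: hprod_eq badd_def algebra_simps)
lemma hprod_smult1: "hprod (smult c p) q = bscale c (hprod p q)"
  by (simp add: hprod_eq bscale_def algebra_simps)
lemma hprod_smult2: "hprod p (smult c q) = bscale (cnj c) (hprod p q)"
  by (simp add: hprod_eq bscale_def algebra_simps)
lemma hprod_conj: "bconj (hprod p q) = hprod q p"
  by (simp add: hprod_eq bconj_def algebra_simps)

locale QS =
  fixes d :: nat and L :: "bpoly \<Rightarrow> complex"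
  assumes lin: "lin_functional (2*d+2) L"
    and real: "real_functional (2*d+2) L"
    and strict: "\<And>p. p \<noteq> 0 \<Longrightarrow> degree p \<le> d \<Longrightarrow>
                   L (hprod p p) \<in> \<real> \<and> Re (L (hprod p p)) > 0"
begin

abbreviation ip where "ip \<equiv> ipL L"
abbreviation M where "M \<equiv> compM L d"
definition B :: "complex poly \<Rightarrow> bool" where "B p \<longleftrightarrow> degree p \<le> Suc d"
definition A :: "complex poly \<Rightarrow> bool" where "A p \<longleftrightarrow> degree p \<le> d"

lemma AB[simp]: "A p \<Longrightarrow> B p" by (simp add: A_def B_def)
lemma B_add[simp]: "B p \<Longrightarrow> B q \<Longrightarrow> B (p + q)"
  unfolding B_def by (meson degree_add_le)
lemma B_diff[simp]: "B p \<Longrightarrow> B q \<Longrightarrow> B (p - q)"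
  unfolding B_def by (meson degree_diff_le)
lemma B_smult[simp]: "B p \<Longrightarrow> B (smult c p)"
  unfolding B_def by (meson degree_smult_le order.trans)
lemma B_uminus[simp]: "B p \<Longrightarrow> B (- p)"
  unfolding B_def by simp
lemma B_0[simp]: "B 0" by (simp add: B_def)
lemma A_add[simp]: "A p \<Longrightarrow> A q \<Longrightarrow> A (p + q)"
  unfolding A_def by (meson degree_add_le)
lemma A_diff[simp]: "A p \<Longrightarrow> A q \<Longrightarrow> A (p - q)"
  unfolding A_def by (meson degree_diff_le)
lemma A_smult[simp]: "A p \<Longrightarrow> A (smult c p)"
  unfolding A_def by (meson degree_smult_le order.trans)
lemma A_uminus[simp]: "A p \<Longrightarrow> A (- p)"
  unfolding A_def by simp
lemma A_0[simp]: "A 0" by (simp add: A_def)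
lemma A_const[simp]: "A [:c:]" by (simp add: A_def)
lemma B_pCons[simp]: "A p \<Longrightarrow> B (pCons c p)"
  unfolding A_def B_def by (cases "p = 0") auto
lemma A_sum[simp]: "(\<And>i. i \<in> S \<Longrightarrow> A (f i)) \<Longrightarrow> A (sum f S)"
  unfolding A_def by (cases "finite S") (auto intro: degree_sum_le)
lemma B_sum[simp]: "(\<And>i. i \<in> S \<Longrightarrow> B (f i)) \<Longrightarrow> B (sum f S)"
  unfolding B_def by (cases "finite S") (auto intro: degree_sum_le)

lemma inb: "B p \<Longrightarrow> B q \<Longrightarrow> in_bdeg (2*d+2) (hprod p q)"
  unfolding B_def by (intro in_bdeg_hprod) simp

lemma ip_add1[simp]: "B p1 \<Longrightarrow> B p2 \<Longrightarrow> B q \<Longrightarrow> ip (p1 + p2) q = ip p1 q + ip p2 q"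
  using lin inb unfolding lin_functional_def ipL_def hprod_add1 by blast
lemma ip_add2[simp]: "B p \<Longrightarrow> B q1 \<Longrightarrow> B q2 \<Longrightarrow> ip p (q1 + q2) = ip p q1 + ip p q2"
  using lin inb unfolding lin_functional_def ipL_def hprod_add2 by blast
lemma ip_smult1[simp]: "B p \<Longrightarrow> B q \<Longrightarrow> ip (smult c p) q = c * ip p q"
  using lin inb unfolding lin_functional_def ipL_def hprod_smult1 by blast
lemma ip_smult2[simp]: "B p \<Longrightarrow> B q \<Longrightarrow> ip p (smult c q) = cnj c * ip p q"
  using lin inb unfolding lin_functional_def ipL_def hprod_smult2 by blast
lemma ip_cnj: "B p \<Longrightarrow> B q \<Longrightarrow> ip q p = cnj (ip p q)"
  using real inb unfolding real_functional_def ipL_def by (metis hprod_conj)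
lemma ip_zero1[simp]: "B q \<Longrightarrow> ip 0 q = 0"
  using ip_smult1[of 0 q 0] by simp
lemma ip_zero2[simp]: "B p \<Longrightarrow> ip p 0 = 0"
  using ip_smult2[of p 0 0] by simp
lemma ip_uminus1[simp]: "B p \<Longrightarrow> B q \<Longrightarrow> ip (- p) q = - ip p q"
  using ip_smult1[of p q "-1"] by simp
lemma ip_uminus2[simp]: "B p \<Longrightarrow> B q \<Longrightarrow> ip p (- q) = - ip p q"
  using ip_smult2[of p q "-1"] by simp
lemma ip_diff1[simp]: "B p1 \<Longrightarrow> B p2 \<Longrightarrow> B q \<Longrightarrow> ip (p1 - p2) q = ip p1 q - ip p2 q"
  using ip_add1[of p1 "-p2" q] by simp
lemma ip_diff2[simp]: "B p \<Longrightarrow> B q1 \<Longrightarrow> B q2 \<Longrightarrow> ip p (q1 - q2) = ip p q1 - ip p q2"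
  using ip_add2[of p q1 "-q2"] by simp
lemma ip_sum1: "(\<And>i. i \<in> S \<Longrightarrow> B (f i)) \<Longrightarrow> B q \<Longrightarrow> ip (sum f S) q = (\<Sum>i\<in>S. ip (f i) q)"
proof (induction S rule: infinite_finite_induct)
  case (insert x F)
  have "B (sum f F)" by (rule B_sum) (use insert in auto)
  then show ?case using insert by simp
qed auto
lemma ip_sum2: "(\<And>i. i \<in> S \<Longrightarrow> B (f i)) \<Longrightarrow> B p \<Longrightarrow> ip p (sum f S) = (\<Sum>i\<in>S. ip p (f i))"
proof (induction S rule: infinite_finite_induct)
  case (insert x F)
  have "B (sum f F)" by (rule B_sum) (use insert in auto)
  then show ?case using insert by simp
qed auto
lemma ip_self_real: "B p \<Longrightarrow> of_real (Re (ip p p)) = ip p p"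
proof -
  assume "B p"
  hence "cnj (ip p p) = ip p p" using ip_cnj[of p p] by simp
  hence "Im (ip p p) = 0" by (metis complex_cnj_cancel_iff Reals_cnj_iff complex_is_Real_iff)
  thus ?thesis by (simp add: complex_eq_iff)
qed
lemma ip_pos: "A p \<Longrightarrow> p \<noteq> 0 \<Longrightarrow> Re (ip p p) > 0"
  using strict unfolding A_def ipL_def by auto
lemma ip_self_zero: "A p \<Longrightarrow> ip p p = 0 \<Longrightarrow> p = 0"
  using ip_pos by force
lemma proj_exists_k: "k \<le> d \<Longrightarrow> B f \<Longrightarrow> \<exists>q. degree q \<le> k \<and> (\<forall>r. degree r \<le> k \<longrightarrow> ip (f - q) r = 0)"
proof (induction k arbitrary: f)
  case 0
  have A1: "A 1" by (simp add: A_def)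
  have n1: "ip 1 1 \<noteq> 0" using ip_pos[OF A1] by force
  define c where "c = ip f 1 / ip 1 1"
  show ?case
  proof (intro exI conjI allI impI)
    show "degree [:c:] \<le> 0" by simp
    fix r :: "complex poly" assume "degree r \<le> 0"
    hence "r = [:coeff r 0:]" using degree_0_id[of r] by simp
    hence r: "r = smult (coeff r 0) 1" by (metis mult.right_neutral pCons_0_0 smult_pCons smult_0_right one_pCons)
    have gen: "\<And>u. B u \<Longrightarrow> ip (f - smult c u) (smult (coeff r 0) u) = cnj (coeff r 0) * (ip f u - c * ip u u)"
      using 0 by (simp add: algebra_simps)
    have "ip (f - [:c:]) r = cnj (coeff r 0) * (ip f 1 - c * ip 1 1)"
      using gen[of 1] A1 r by simp
    also have "\<dots> = 0" using n1 by (simp add: c_def)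
    finally show "ip (f - [:c:]) r = 0" .
  qed
next
  case (Suc k)
  have Bm: "B (monom 1 (Suc k))" using Suc.prems by (simp add: B_def degree_monom_eq)
  obtain qe where qe: "degree qe \<le> k" "\<And>r. degree r \<le> k \<Longrightarrow> ip (monom 1 (Suc k) - qe) r = 0"
    using Suc.IH[OF _ Bm] Suc.prems by auto
  obtain qf where qf: "degree qf \<le> k" "\<And>r. degree r \<le> k \<Longrightarrow> ip (f - qf) r = 0"
    using Suc.IH[OF _ Suc.prems(2)] Suc.prems by auto
  define e where "e = monom 1 (Suc k) - qe"
  have ce: "coeff e (Suc k) = 1" using qe(1) by (simp add: e_def coeff_eq_0)
  have de: "degree e \<le> Suc k" unfolding e_def
    by (metis degree_diff_le degree_monom_le le_SucI qe(1))
  have Ae: "A e" using de Suc.prems by (simp add: A_def)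
  have e0: "e \<noteq> 0" using ce by auto
  have nee: "ip e e \<noteq> 0" using ip_pos[OF Ae e0] by force
  have Aqf: "A qf" using qf(1) Suc.prems by (simp add: A_def)
  have Bf: "B f" by fact
  define l where "l = ip (f - qf) e / ip e e"
  show ?case
  proof (intro exI conjI allI impI)
    show "degree (qf + smult l e) \<le> Suc k"
      by (metis de degree_add_le degree_smult_le le_SucI order.trans qf(1))
    fix r :: "complex poly" assume dr: "degree r \<le> Suc k"
    define c where "c = coeff r (Suc k)"
    define r' where "r' = r - smult c e"
    have dr': "degree r' \<le> k"
    proof (rule degree_le, intro allI impI)
      fix i assume "k < i"
      show "coeff r' i = 0"
      proof (cases "i = Suc k")
        case True thus ?thesis by (simp add: r'_def c_def ce)
      next
        case False
        hence "Suc k < i" using \<open>k < i\<close> by simp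
        thus ?thesis using dr de by (simp add: r'_def coeff_eq_0)
      qed
    qed
    have Ar': "A r'" using dr' Suc.prems by (simp add: A_def)
    have r: "r = r' + smult c e" by (simp add: r'_def)
    have fq: "f - (qf + smult l e) = (f - qf) - smult l e" by (simp add: algebra_simps)
    have z1: "ip (f - qf) r' = 0" using qf(2)[OF dr'] .
    have z2: "ip e r' = 0" using qe(2)[OF dr'] by (simp add: e_def)
    have "ip (f - (qf + smult l e)) r = (ip (f - qf) r' - l * ip e r') + cnj c * (ip (f - qf) e - l * ip e e)"
      unfolding fq using Bf Aqf Ae Ar' by (subst r) (simp add: algebra_simps)
    also have "\<dots> = 0" using z1 z2 nee by (simp add: l_def)
    finally show "ip (f - (qf + smult l e)) r = 0" .
  qed
qed

lemma proj_unique: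
  assumes "B f" "A q" "\<And>r. A r \<Longrightarrow> ip (f - q) r = 0"
  shows "projL L d f = q"
  unfolding projL_def
proof (rule the_equality)
  show "degree q \<le> d \<and> (\<forall>r. degree r \<le> d \<longrightarrow> ipL L (f - q) r = 0)"
    using assms by (auto simp: A_def)
  fix q' assume q': "degree q' \<le> d \<and> (\<forall>r. degree r \<le> d \<longrightarrow> ipL L (f - q') r = 0)"
  have Aq': "A q'" using q' by (simp add: A_def)
  have "ip (q - q') (q - q') = ip (f - q') (q - q') - ip (f - q) (q - q')"
    using assms Aq' by (simp add: algebra_simps)
  also have "\<dots> = 0" using q' assms Aq' by (simp add: A_def[symmetric])
  finally show "q' = q" using ip_self_zero[of "q - q'"] assms Aq' by simp
qed

lemma proj_props:
  assumes "B f"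
  shows "A (projL L d f)" "\<And>r. A r \<Longrightarrow> ip (f - projL L d f) r = 0"
proof -
  obtain q where q: "degree q \<le> d" "\<And>r. degree r \<le> d \<Longrightarrow> ip (f - q) r = 0"
    using proj_exists_k[OF le_refl assms] by auto
  have "projL L d f = q" using proj_unique[OF assms, of q] q by (auto simp: A_def)
  thus "A (projL L d f)" "\<And>r. A r \<Longrightarrow> ip (f - projL L d f) r = 0"
    using q by (auto simp: A_def)
qed

lemma M_props:
  assumes "A p"
  shows "A (M p)" "\<And>r. A r \<Longrightarrow> ip (pCons 0 p - M p) r = 0"
  using proj_props[of "pCons 0 p"] assms by (auto simp: compM_def)

lemma M_unique: "A p \<Longrightarrow> A q \<Longrightarrow> (\<And>r. A r \<Longrightarrow> ip (pCons 0 p - q) r = 0) \<Longrightarrow> M p = q"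
  unfolding compM_def by (rule proj_unique) auto

lemma M_add: "A p \<Longrightarrow> A q \<Longrightarrow> M (p + q) = M p + M q"
proof (rule M_unique)
  assume a: "A p" "A q"
  show "A (M p + M q)" using M_props a by simp
  fix r assume r: "A r"
  have e: "pCons 0 (p + q) - (M p + M q) = (pCons 0 p - M p) + (pCons 0 q - M q)" by simp
  have "ip ((pCons 0 p - M p) + (pCons 0 q - M q)) r = ip (pCons 0 p - M p) r + ip (pCons 0 q - M q) r"
    by (rule ip_add1) (use M_props a r in simp_all)
  thus "ip (pCons 0 (p + q) - (M p + M q)) r = 0" unfolding e using M_props a r by simp
qed simp

lemma M_smult: "A p \<Longrightarrow> M (smult c p) = smult c (M p)"
proof (rule M_unique)
  assume a: "A p"
  show "A (smult c (M p))" using M_props a by simp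
  fix r assume r: "A r"
  have e: "pCons 0 (smult c p) - smult c (M p) = smult c (pCons 0 p - M p)" by (simp add: smult_diff_right)
  have "ip (smult c (pCons 0 p - M p)) r = c * ip (pCons 0 p - M p) r"
    by (rule ip_smult1) (use M_props a r in simp_all)
  thus "ip (pCons 0 (smult c p) - smult c (M p)) r = 0" unfolding e using M_props a r by simp
qed simp
lemma quad_zero:
  fixes R X :: real
  assumes "\<And>t. 0 \<le> 2*t*R + t^2*X"
  shows "R = 0"
proof (rule ccontr)
  assume R: "R \<noteq> 0"
  obtain Y where Y: "Y = \<bar>X\<bar>" by simp
  have Y0: "Y \<ge> 0" "X \<le> Y" using Y by auto
  define t where "t = - R / (Y + 1)"
  have pos: "Y + 1 > 0" using Y0 by simp
  have Rt: "R = - t * (Y + 1)" using pos by (simp add: t_def)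
  have t0: "t \<noteq> 0" using R pos by (simp add: t_def)
  have "2*t*R + t^2*X \<le> 2*t*R + t^2*Y"
    using Y0 by (intro add_left_mono mult_left_mono) auto
  also have "\<dots> = - (t^2) * (Y + 2)"
    unfolding Rt by (simp add: power2_eq_square algebra_simps)
  also have "\<dots> < 0"
    using t0 Y0 by (simp add: mult_pos_pos)
  finally show False using assms[of t] by linarith
qed

lemma psi:
  assumes S: "\<And>p q. A p \<Longrightarrow> A q \<Longrightarrow> sigmaM L d p q \<ge> 0"
    and Av: "A v" and Mv: "M v = smult a v" and Ax: "A x"
  shows "ip (M x) v = a * ip x v"
proof -
  define w where "w = ip (M x) v - a * ip x v"
  define Xr where "Xr = Re (ip x x)"
  define V where "V = ip v v"
  have X: "ip x x = of_real Xr" using ip_self_real[of x] Ax by (simp add: Xr_def)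
  have AMx: "A (M x)" using M_props Ax by simp
  have key: "sigmaM L d (smult (- cnj a) v + smult s x) v = 2 * Re (s * w) + (cmod s)^2 * Xr" for s
  proof -
    let ?p = "smult (- cnj a) v + smult s x"
    have "M ?p = M (smult (- cnj a) v) + M (smult s x)"
      by (rule M_add) (use Av Ax in simp_all)
    also have "\<dots> = smult (- cnj a) (M v) + smult s (M x)"
      using Av Ax by (simp only: M_smult)
    finally have Mp: "M ?p = smult (- cnj a * a) v + smult s (M x)"
      using Mv by simp
    have e1: "ip ?p ?p = a * cnj a * V - cnj (a * s * ip x v) - a * s * ip x v + s * cnj s * ip x x"
      using Av Ax ip_cnj[of x v] by (simp add: algebra_simps V_def)
    have e2: "ip (M v) (M v) = a * cnj a * V"
      using Av Mv by (simp add: algebra_simps V_def)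
    have e3: "ip (M ?p) v = - (cnj a * a) * V + s * ip (M x) v"
      unfolding Mp using Av AMx by (simp add: algebra_simps V_def)
    have Vr: "V = of_real (Re V)" using ip_self_real[of v] Av by (simp add: V_def)
    have s2: "s * cnj s = of_real ((cmod s)^2)" by (metis complex_norm_square of_real_power)
    have a2: "a * cnj a = of_real ((cmod a)^2)" by (metis complex_norm_square of_real_power)
    show ?thesis
      unfolding sigmaM_def e1 e2 e3 w_def
      apply (subst (1 2 3) Vr)
      apply (simp add: X s2 a2 mult.commute[of "cnj a" a] algebra_simps)
      done
  qed
  have r1: "Re w = 0"
  proof (rule quad_zero[of _ Xr])
    fix t :: real
    have "0 \<le> sigmaM L d (smult (- cnj a) v + smult (of_real t) x) v" using S Av Ax by simp
    thus "0 \<le> 2 * t * Re w + t^2 * Xr" unfolding key by simp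
  qed
  have r2: "- Im w = 0"
  proof (rule quad_zero[of _ Xr])
    fix t :: real
    have "0 \<le> sigmaM L d (smult (- cnj a) v + smult (\<i> * of_real t) x) v" using S Av Ax by simp
    thus "0 \<le> 2 * t * (- Im w) + t^2 * Xr" unfolding key by (simp add: norm_mult)
  qed
  have "w = 0" using r1 r2 by (simp add: complex_eq_iff)
  thus ?thesis by (simp add: w_def)
qed
lemma linmul: "[:-a, 1:] * p = pCons 0 p - smult (a::complex) p"
  by (simp add: mult_pCons_left)

lemma pCons0_sum: "pCons 0 (sum f S) = (\<Sum>k\<in>S. pCons 0 (f k :: complex poly))"
proof (induction S rule: infinite_finite_induct)
  case (insert x F)
  thus ?case using add_pCons[of 0 "f x" 0 "sum f F"] by simp
qed auto

lemma dir_ba: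
  assumes S: "\<And>p q. A p \<Longrightarrow> A q \<Longrightarrow> sigmaM L d p q \<ge> 0"
  shows "\<exists>(a::nat \<Rightarrow> complex) (c::nat \<Rightarrow> real).
             (\<forall>k<Suc d. c k > 0) \<and>
             (\<forall>p q. degree p \<le> d + 1 \<longrightarrow> degree q \<le> d + 1 \<longrightarrow>
                    degree p + degree q \<le> 2*d+1 \<longrightarrow>
                    L (hprod p q) = (\<Sum>k<Suc d. of_real (c k) * poly p (a k) * cnj (poly q (a k))))"
proof -
  define m where "m = monom (1::complex) (Suc d)"
  have Bm: "B m" by (simp add: m_def B_def degree_monom_eq)
  define P where "P = m - projL L d m"
  have Ap: "A (projL L d m)" and Port: "\<And>r. A r \<Longrightarrow> ip P r = 0"
    using proj_props[OF Bm] by (auto simp: P_def)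
  have BP: "B P" using Bm Ap by (simp add: P_def)
  have cP: "coeff P (Suc d) = 1" using Ap by (simp add: P_def m_def A_def coeff_eq_0)
  have dP: "degree P = Suc d"
    using BP cP by (metis B_def le_antisym le_degree one_neq_zero)
  have lP: "lead_coeff P = 1" using cP dP by simp
  obtain root where root: "smult (lead_coeff P) (\<Prod>i<degree P. [:-root i, 1:]) = P"
    using complex_poly_decompose'[of P] by blast
  define I where "I = {..<Suc d}"
  have PI: "P = (\<Prod>i\<in>I. [:-root i, 1:])" using root lP dP by (simp add: I_def)
  define v where "v k = (\<Prod>i\<in>I-{k}. [:-root i, 1:])" for k
  have Pv: "P = [:-root k, 1:] * v k" if "k \<in> I" for k
    unfolding PI v_def by (rule prod.remove) (use that in \<open>simp_all add: I_def\<close>)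
  have v0: "v k \<noteq> 0" for k by (simp add: v_def I_def)
  have Av: "A (v k)" if "k \<in> I" for k
  proof -
    have "degree (v k) \<le> sum (degree \<circ> (\<lambda>i. [:-root i, 1:])) (I - {k})"
      unfolding v_def by (rule degree_prod_sum_le) (simp add: I_def)
    also have "\<dots> = card (I - {k})" by simp
    also have "\<dots> = d" using that by (simp add: I_def)
    finally show ?thesis by (simp add: A_def)
  qed
  have vz: "poly (v k) (root j) = 0" if "j \<in> I" "j \<noteq> k" for j k
    unfolding v_def poly_prod using that by (auto simp: I_def)
  have Mv: "M (v k) = smult (root k) (v k)" if "k \<in> I" for k
  proof (rule M_unique)
    show "A (v k)" "A (smult (root k) (v k))" using Av that by auto
    fix r assume "A r"
    have "pCons 0 (v k) - smult (root k) (v k) = P" using Pv[OF that] by (simp add: linmul)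
    thus "ip (pCons 0 (v k) - smult (root k) (v k)) r = 0" using Port \<open>A r\<close> by simp
  qed
  have vnz: "poly (v k) (root k) \<noteq> 0" if k: "k \<in> I" for k
  proof
    assume "poly (v k) (root k) = 0"
    then obtain u where u: "v k = [:-root k, 1:] * u" by (auto simp: poly_eq_0_iff_dvd dvd_def)
    have u0: "u \<noteq> 0" using u v0 by auto
    have "degree ([:-root k, 1:] * u) = degree [:-root k, 1:] + degree u"
      by (rule degree_mult_eq) (use u0 in auto)
    hence "degree (v k) = 1 + degree u" using u by simp
    hence Au: "A u" using Av[OF k] by (simp add: A_def)
    have Mu: "M u = smult (root k) u + v k"
    proof (rule M_unique)
      show "A u" "A (smult (root k) u + v k)" using Au Av k by auto
      fix r assume "A r"
      have "pCons 0 u - (smult (root k) u + v k) = 0" using u by (simp add: linmul)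
      thus "ip (pCons 0 u - (smult (root k) u + v k)) r = 0" using \<open>A r\<close> by simp
    qed
    have "ip (M u) (v k) = root k * ip u (v k)" by (rule psi[OF S Av[OF k] Mv[OF k] Au])
    hence "ip (v k) (v k) = 0" unfolding Mu using Au Av[OF k] by simp
    thus False using ip_self_zero[OF Av[OF k]] v0 by blast
  qed
  have rinj: "root j \<noteq> root k" if "j \<in> I" "k \<in> I" "j \<noteq> k" for j k
    using vz[of j k] vnz[of k] that by metis
  have orth: "ip (v j) (v k) = 0" if "j \<in> I" "k \<in> I" "j \<noteq> k" for j k
  proof -
    have "ip (M (v j)) (v k) = root k * ip (v j) (v k)" by (rule psi[OF S Av Mv Av]) (use that in auto)
    hence "(root j - root k) * ip (v j) (v k) = 0" unfolding Mv[OF that(1)] using Av that by (simp add: algebra_simps)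
    thus ?thesis using rinj[OF that] by simp
  qed
  define lam where "lam p k = poly p (root k) / poly (v k) (root k)" for p k
  have expand: "p = (\<Sum>k\<in>I. smult (lam p k) (v k))" if Ap: "A p" for p
  proof (rule poly_eqI_degree[of "root ` I"])
    fix x assume "x \<in> root ` I"
    then obtain j where j: "j \<in> I" "x = root j" by auto
    have "poly (\<Sum>k\<in>I. smult (lam p k) (v k)) x = (\<Sum>k\<in>I. lam p k * poly (v k) (root j))"
      by (simp add: poly_sum j)
    also have "\<dots> = lam p j * poly (v j) (root j)"
      by (subst sum.remove[OF _ j(1)]) (use vz j in \<open>auto simp: I_def\<close>)
    also have "\<dots> = poly p x" using vnz[OF j(1)] by (simp add: lam_def j)
    finally show "poly p x = poly (\<Sum>k\<in>I. smult (lam p k) (v k)) x" by simp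
  next
    have "inj_on root I" using rinj by (meson inj_onI)
    hence c: "card (root ` I) = Suc d" by (simp add: card_image I_def)
    show "degree p < card (root ` I)" using Ap c by (simp add: A_def)
    have "A (\<Sum>k\<in>I. smult (lam p k) (v k))" using Av by simp
    thus "degree (\<Sum>k\<in>I. smult (lam p k) (v k)) < card (root ` I)" using c by (simp add: A_def)
  qed
  have ipvq: "ip (v k) q = cnj (lam q k) * ip (v k) (v k)" if k: "k \<in> I" and Aq: "A q" for k q
  proof -
    have "ip (v k) q = ip (v k) (\<Sum>j\<in>I. smult (lam q j) (v j))" using arg_cong[OF expand[OF Aq], of "ip (v k)"] .
    also have "\<dots> = (\<Sum>j\<in>I. ip (v k) (smult (lam q j) (v j)))"
      by (rule ip_sum2) (use Av k in auto)
    also have "\<dots> = (\<Sum>j\<in>I. cnj (lam q j) * ip (v k) (v j))"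
      by (rule sum.cong) (use Av k in auto)
    also have "\<dots> = cnj (lam q k) * ip (v k) (v k)"
      by (subst sum.remove[OF _ k]) (use orth k in \<open>auto simp: I_def\<close>)
    finally show ?thesis .
  qed
  define c where "c k = Re (ip (v k) (v k)) / (cmod (poly (v k) (root k)))^2" for k
  have cpos: "c k > 0" if "k \<in> I" for k
    using ip_pos[OF Av v0] vnz that by (simp add: c_def)
  have trm: "lam p k * cnj (lam q k) * ip (v k) (v k) = of_real (c k) * poly p (root k) * cnj (poly q (root k))"
    if k: "k \<in> I" for p q k
  proof -
    have V: "ip (v k) (v k) = of_real (Re (ip (v k) (v k)))" using ip_self_real Av k by simp
    have w: "poly (v k) (root k) * cnj (poly (v k) (root k)) = of_real ((cmod (poly (v k) (root k)))^2)"
      by (metis complex_norm_square of_real_power)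
    have wn: "poly (v k) (root k) * cnj (poly (v k) (root k)) \<noteq> 0" using vnz k by simp
    have e1: "lam p k * cnj (lam q k) = poly p (root k) * cnj (poly q (root k)) /
        (poly (v k) (root k) * cnj (poly (v k) (root k)))"
      by (simp add: lam_def)
    show ?thesis
      unfolding e1 w c_def
      by (subst V) (simp add: of_real_divide)
  qed
  have Q1: "ip p q = (\<Sum>k\<in>I. of_real (c k) * poly p (root k) * cnj (poly q (root k)))"
    if Ap: "A p" and Aq: "A q" for p q
  proof -
    have "ip p q = ip (\<Sum>k\<in>I. smult (lam p k) (v k)) q" using arg_cong[OF expand[OF Ap], of "\<lambda>x. ip x q"] .
    also have "\<dots> = (\<Sum>k\<in>I. ip (smult (lam p k) (v k)) q)"
      by (rule ip_sum1) (use Av Aq in auto)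
    also have "\<dots> = (\<Sum>k\<in>I. lam p k * cnj (lam q k) * ip (v k) (v k))"
    proof (rule sum.cong)
      fix k assume k: "k \<in> I"
      have "ip (smult (lam p k) (v k)) q = lam p k * ip (v k) q" using Av k Aq by simp
      also have "\<dots> = lam p k * cnj (lam q k) * ip (v k) (v k)" unfolding ipvq[OF k Aq] by simp
      finally show "ip (smult (lam p k) (v k)) q = lam p k * cnj (lam q k) * ip (v k) (v k)" .
    qed simp
    also have "\<dots> = (\<Sum>k\<in>I. of_real (c k) * poly p (root k) * cnj (poly q (root k)))"
      by (rule sum.cong) (use trm in auto)
    finally show ?thesis .
  qed
  have pv: "pCons 0 (v k) = smult (root k) (v k) + P" if k: "k \<in> I" for k
    using Pv[OF k] by (simp add: linmul)
  have ippv: "ip (pCons 0 (v k)) q = root k * ip (v k) q" if k: "k \<in> I" and Aq: "A q" for k q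
  proof -
    have "ip (smult (root k) (v k) + P) q = ip (smult (root k) (v k)) q + ip P q"
      by (rule ip_add1) (use Av k BP Aq in auto)
    also have "\<dots> = root k * ip (v k) q" using Port[OF Aq] Av k Aq by simp
    finally show ?thesis unfolding pv[OF k] .
  qed
  have Q2: "ip (pCons 0 p) q = (\<Sum>k\<in>I. of_real (c k) * (root k * poly p (root k)) * cnj (poly q (root k)))"
    if Ap: "A p" and Aq: "A q" for p q
  proof -
    have "pCons 0 p = pCons 0 (\<Sum>k\<in>I. smult (lam p k) (v k))"
      using arg_cong[OF expand[OF Ap], of "pCons 0"] .
    also have "\<dots> = (\<Sum>k\<in>I. smult (lam p k) (pCons 0 (v k)))"
      unfolding pCons0_sum by (simp add: smult_pCons)
    finally have e: "pCons 0 p = (\<Sum>k\<in>I. smult (lam p k) (pCons 0 (v k)))" .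
    have "ip (pCons 0 p) q = (\<Sum>k\<in>I. ip (smult (lam p k) (pCons 0 (v k))) q)"
      unfolding e by (rule ip_sum1) (use Av Aq in auto)
    also have "\<dots> = (\<Sum>k\<in>I. of_real (c k) * (root k * poly p (root k)) * cnj (poly q (root k)))"
    proof (rule sum.cong)
      fix k assume k: "k \<in> I"
      have "ip (smult (lam p k) (pCons 0 (v k))) q = lam p k * ip (pCons 0 (v k)) q"
        by (rule ip_smult1) (use Av k Aq in auto)
      also have "\<dots> = root k * (lam p k * cnj (lam q k) * ip (v k) (v k))"
        unfolding ippv[OF k Aq] ipvq[OF k Aq] by simp
      also have "\<dots> = of_real (c k) * (root k * poly p (root k)) * cnj (poly q (root k))"
        unfolding trm[OF k] by simp
      finally show "ip (smult (lam p k) (pCons 0 (v k))) q =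
          of_real (c k) * (root k * poly p (root k)) * cnj (poly q (root k))" .
    qed simp
    finally show ?thesis .
  qed
  have Q3: "ip p q = (\<Sum>k\<in>I. of_real (c k) * poly p (root k) * cnj (poly q (root k)))"
    if Bp: "B p" and Aq: "A q" for p q
  proof -
    obtain a0 p' where p: "p = pCons a0 p'" by (cases p) auto
    have Ap': "A p'"
    proof (cases "p' = 0")
      case False
      thus ?thesis using Bp p by (simp add: A_def B_def)
    qed simp
    have pe: "p = [:a0:] + pCons 0 p'" using p by simp
    have "ip p q = ip [:a0:] q + ip (pCons 0 p') q"
      unfolding pe by (rule ip_add1) (use Ap' Aq in auto)
    also have "\<dots> = (\<Sum>k\<in>I. of_real (c k) * a0 * cnj (poly q (root k))) +
        (\<Sum>k\<in>I. of_real (c k) * (root k * poly p' (root k)) * cnj (poly q (root k)))"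
      using Q1[of "[:a0:]" q] Q2[OF Ap' Aq] Aq by simp
    also have "\<dots> = (\<Sum>k\<in>I. of_real (c k) * poly p (root k) * cnj (poly q (root k)))"
      unfolding sum.distrib[symmetric] p by (rule sum.cong) (simp_all add: algebra_simps)
    finally show ?thesis .
  qed
  show ?thesis
  proof (intro exI conjI allI impI)
    show "0 < c k" if "k < Suc d" for k using cpos that by (simp add: I_def)
    fix p q :: "complex poly"
    assume dp: "degree p \<le> d + 1" and dq: "degree q \<le> d + 1" and ds: "degree p + degree q \<le> 2*d+1"
    show "L (hprod p q) = (\<Sum>k<Suc d. of_real (c k) * poly p (root k) * cnj (poly q (root k)))"
    proof (cases "degree q \<le> d")
      case True
      thus ?thesis using Q3[of p q] dp by (simp add: A_def B_def I_def ipL_def)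
    next
      case False
      hence Ap: "A p" using ds dq by (simp add: A_def)
      have Bq: "B q" using dq by (simp add: B_def)
      have "L (hprod p q) = cnj (ip q p)" using ip_cnj[of p q] Ap Bq by (simp add: ipL_def)
      also have "\<dots> = cnj (\<Sum>k\<in>I. of_real (c k) * poly q (root k) * cnj (poly p (root k)))"
        using Q3[OF Bq Ap] by simp
      also have "\<dots> = (\<Sum>k<Suc d. of_real (c k) * poly p (root k) * cnj (poly q (root k)))"
        by (simp add: I_def cnj_sum mult_ac)
      finally show ?thesis .
    qed
  qed
qed
lemma aux_sq: "Re (of_real c * x * cnj x) + Re (of_real c * (b*y) * cnj (b*y)) + 2 * Re (of_real c * (b*x) * cnj y)
   = c * (cmod (x + cnj b * y))^2"
  unfolding cmod_power2 by (simp add: algebra_simps power2_eq_square)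

lemma dir_ab:
  assumes N: "N \<le> d + 1" and cpos: "\<forall>k<N. c k > 0"
    and Q: "\<forall>p q. degree p \<le> d + 1 \<longrightarrow> degree q \<le> d + 1 \<longrightarrow> degree p + degree q \<le> 2*d+1 \<longrightarrow>
               L (hprod p q) = (\<Sum>k<N. of_real (c k) * poly p (a k) * cnj (poly q (a k)))"
    and Ap: "A p" and Aq: "A q"
  shows "sigmaM L d p q \<ge> 0"
proof -
  define K where "K = {..<N}"
  have QB: "ip p q = (\<Sum>k\<in>K. of_real (c k) * poly p (a k) * cnj (poly q (a k)))"
    if "B p" "A q" for p q
    using Q that by (simp add: A_def B_def ipL_def K_def)
  define S where "S = a ` K"
  have fS: "finite S" by (simp add: S_def K_def)
  have cS: "card S = Suc d"
  proof (rule ccontr)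
    assume ne: "card S \<noteq> Suc d"
    have "card S \<le> card K" unfolding S_def by (rule card_image_le) (simp add: K_def)
    hence "card S \<le> d" using ne N by (simp add: K_def)
    define p0 where "p0 = (\<Prod>s\<in>S. [:-s, 1:])"
    have p00: "p0 \<noteq> 0" using fS by (simp add: p0_def)
    have "degree p0 \<le> sum (degree \<circ> (\<lambda>s. [:-s, 1:])) S"
      unfolding p0_def by (rule degree_prod_sum_le) (rule fS)
    hence Ap0: "A p0" using \<open>card S \<le> d\<close> by (simp add: A_def)
    have z: "poly p0 (a k) = 0" if "k \<in> K" for k
      unfolding p0_def poly_prod using fS that by (auto simp: S_def)
    have "ip p0 p0 = 0" using QB[of p0 p0] Ap0 z by simp
    thus False using ip_self_zero[OF Ap0] p00 by simp
  qed
  have inj: "inj_on a K"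
  proof -
    have "card S \<le> card K" unfolding S_def by (rule card_image_le) (simp add: K_def)
    hence "card (a ` K) = card K" using cS N by (simp add: S_def K_def)
    thus ?thesis by (simp add: inj_on_iff_eq_card K_def)
  qed
  define l where "l k = (\<Prod>j\<in>K-{k}. [:-a j, 1:])" for k
  have Al: "A (l k)" if "k \<in> K" for k
  proof -
    have "degree (l k) \<le> sum (degree \<circ> (\<lambda>j. [:-a j, 1:])) (K - {k})"
      unfolding l_def by (rule degree_prod_sum_le) (simp add: K_def)
    also have "\<dots> = card (K - {k})" by simp
    also have "\<dots> \<le> d" using that N by (simp add: K_def)
    finally show ?thesis by (simp add: A_def)
  qed
  have lz: "poly (l k) (a j) = 0" if "j \<in> K" "j \<noteq> k" for j k
    unfolding l_def poly_prod using that by (auto simp: K_def)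
  have lnz: "poly (l k) (a k) \<noteq> 0" if "k \<in> K" for k
    unfolding l_def poly_prod using that inj by (auto simp: K_def inj_on_def)
  have Mev: "poly (M r) (a k) = a k * poly r (a k)" if Ar: "A r" and k: "k \<in> K" for r k
  proof -
    define u where "u = pCons 0 r - M r"
    have Bu: "B u" using Ar M_props by (simp add: u_def)
    have "0 = ip u (l k)" using M_props(2)[OF Ar Al[OF k]] by (simp add: u_def)
    also have "\<dots> = (\<Sum>j\<in>K. of_real (c j) * poly u (a j) * cnj (poly (l k) (a j)))"
      using QB[OF Bu Al[OF k]] .
    also have "\<dots> = of_real (c k) * poly u (a k) * cnj (poly (l k) (a k))"
      by (subst sum.remove[OF _ k]) (use lz k in \<open>auto simp: K_def\<close>)
    moreover have "c k \<noteq> 0" using cpos k by (auto simp: K_def)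
    ultimately have "poly u (a k) = 0" using lnz[OF k] by simp
    thus ?thesis by (simp add: u_def)
  qed
  have AMp: "A (M p)" and AMq: "A (M q)" using M_props Ap Aq by auto
  have "sigmaM L d p q = (\<Sum>k\<in>K. Re (of_real (c k) * poly p (a k) * cnj (poly p (a k))) +
      Re (of_real (c k) * (a k * poly q (a k)) * cnj (a k * poly q (a k))) +
      2 * Re (of_real (c k) * (a k * poly p (a k)) * cnj (poly q (a k))))"
    unfolding sigmaM_def QB[OF AB[OF Ap] Ap] QB[OF AB[OF AMq] AMq] QB[OF AB[OF AMp] Aq]
    by (simp add: sum.distrib sum_distrib_left Mev Aq Ap)
  also have "\<dots> = (\<Sum>k\<in>K. c k * (cmod (poly p (a k) + cnj (a k) * poly q (a k)))^2)"
    by (rule sum.cong) (simp_all only: aux_sq)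
  also have "\<dots> \<ge> 0" using cpos by (intro sum_nonneg mult_nonneg_nonneg) (auto simp: K_def less_imp_le)
  finally show ?thesis .
qed
end

theorem theorem3:
  fixes d :: nat and L :: "bpoly \<Rightarrow> complex"
  assumes lin: "lin_functional (2*d+2) L"
    and real: "real_functional (2*d+2) L"
    and nonneg: "\<And>f. in_bdeg (d+1) f \<Longrightarrow>
                   L (bmult f (bconj f)) \<in> \<real> \<and> Re (L (bmult f (bconj f))) \<ge> 0"
    and strict: "\<And>p. p \<noteq> 0 \<Longrightarrow> degree p \<le> d \<Longrightarrow>
                   L (hprod p p) \<in> \<real> \<and> Re (L (hprod p p)) > 0"
  shows "(\<exists>N::nat. N \<le> d + 1 \<and> (\<exists>(a::nat \<Rightarrow> complex) (c::nat \<Rightarrow> real).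
             (\<forall>k<N. c k > 0) \<and>
             (\<forall>p q. degree p \<le> d + 1 \<longrightarrow> degree q \<le> d + 1 \<longrightarrow>
                    degree p + degree q \<le> 2*d+1 \<longrightarrow>
                    L (hprod p q) = (\<Sum>k<N. of_real (c k) * poly p (a k) * cnj (poly q (a k))))))
     \<longleftrightarrow> (\<forall>p q. degree p \<le> d \<longrightarrow> degree q \<le> d \<longrightarrow> sigmaM L d p q \<ge> 0)"
proof -
  interpret QS d L using lin real strict by unfold_locales auto
  show ?thesis
  proof
    assume "\<exists>N::nat. N \<le> d + 1 \<and> (\<exists>(a::nat \<Rightarrow> complex) (c::nat \<Rightarrow> real).
             (\<forall>k<N. c k > 0) \<and>
             (\<forall>p q. degree p \<le> d + 1 \<longrightarrow> degree q \<le> d + 1 \<longrightarrow>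
                    degree p + degree q \<le> 2*d+1 \<longrightarrow>
                    L (hprod p q) = (\<Sum>k<N. of_real (c k) * poly p (a k) * cnj (poly q (a k)))))"
    then obtain N a c where N: "N \<le> d + 1" and cp: "\<forall>k<N. c k > 0"
      and Q: "\<forall>p q. degree p \<le> d + 1 \<longrightarrow> degree q \<le> d + 1 \<longrightarrow> degree p + degree q \<le> 2*d+1 \<longrightarrow>
               L (hprod p q) = (\<Sum>k<N. of_real (c k) * poly p (a k) * cnj (poly q (a k)))"
      by blast
    show "\<forall>p q. degree p \<le> d \<longrightarrow> degree q \<le> d \<longrightarrow> sigmaM L d p q \<ge> 0"
      using dir_ab[OF N cp Q] by (simp add: A_def)
  next
    assume S: "\<forall>p q. degree p \<le> d \<longrightarrow> degree q \<le> d \<longrightarrow> sigmaM L d p q \<ge> 0"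
    have "\<exists>(a::nat \<Rightarrow> complex) (c::nat \<Rightarrow> real).
             (\<forall>k<Suc d. c k > 0) \<and>
             (\<forall>p q. degree p \<le> d + 1 \<longrightarrow> degree q \<le> d + 1 \<longrightarrow>
                    degree p + degree q \<le> 2*d+1 \<longrightarrow>
                    L (hprod p q) = (\<Sum>k<Suc d. of_real (c k) * poly p (a k) * cnj (poly q (a k))))"
      by (rule dir_ba) (use S in \<open>auto simp: A_def\<close>)
    thus "\<exists>N::nat. N \<le> d + 1 \<and> (\<exists>(a::nat \<Rightarrow> complex) (c::nat \<Rightarrow> real).
             (\<forall>k<N. c k > 0) \<and>
             (\<forall>p q. degree p \<le> d + 1 \<longrightarrow> degree q \<le> d + 1 \<longrightarrow>
                    degree p + degree q \<le> 2*d+1 \<longrightarrow>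
                    L (hprod p q) = (\<Sum>k<N. of_real (c k) * poly p (a k) * cnj (poly q (a k)))))"
      by (intro exI[of _ "Suc d"]) simp
  qed
qed

end
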